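(* Let $\langle c^m,c^M\rangle$ be a cell of size $n$. Let $c$ be any $(n-1)$-tuple such that $c_i\in\{c^m_i,c^M_i\}$ for every $i\in[n-1]$. Then $c$ is a cubic coordinate.
   Context: A Tamari diagram of size $n$ is a word $u=u_1\cdots u_n$ of integers with $0\leq u_i\leq n-i$ and $u_{i+j}\leq u_i-j$ for all $i\in[n]$, $0\leq j\leq u_i$. A dual Tamari diagram of size $n$ is a word $v$ of integers with $0\leq v_i\leq i-1$ and $v_{i-j}\leq v_i-j$ for all $i\in[n]$, $0\leq j\leq v_i$. $(u,v)$ is a Tamari interval diagram if moreover for all $1\leq i<j\leq n$ with $j-i\leq u_i$ one has $v_j<j-i$. A cubic coordinate of size $n$ is $c\in\mathbb{Z}^{n-1}$ such that $(u,v)$ with $u_i=\max(c_i,0)$ ($i\in[n-1]$), $u_n=0$, $v_1=0$, $v_i=|\min(c_{i-1},0)|$ ($2\leq i\leq n$) is a Tamari interval diagram. For a cubic coordinate $c$ and $i\in[n-1]$, the minimal increase $\uparrow_i(c)$ is defined when there exists a cubic coordinate agreeing with $c$ outside position $i$ and with $i$-th entry $>c_i$; then $\uparrow_i(c)$ is obtained from $c$ by replacing $c_i$ by the smallest integer $t>c_i$ such that the result is a cubic coordinate. $c$ is minimal-cellular if $\uparrow_i(c)$ is defined for all $i\in[n-1]$. A cell of size $n$ is a pair $\langle c^m,c^M\rangle$ where $c^m$ is a minimal-cellular cubic coordinate of size $n$ and $c^M=\uparrow_1(\uparrow_2(\cdots(\uparrow_{n-1}(c^m))\cdots))$ (every step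 of this composition is defined). *)

theory Defs
  imports Main
begin

text \<open>Words are indexed 1..n; a word of size n is a function nat => int,
  only positions 1..n matter. A cubic coordinate of size n is an int list of
  length n-1, where c_i is c ! (i-1).\<close>

definition tamari_diagram :: "nat \<Rightarrow> (nat \<Rightarrow> int) \<Rightarrow> bool" where
  "tamari_diagram n u \<longleftrightarrow>
     (\<forall>i\<in>{1..n}. 0 \<le> u i \<and> u i \<le> int n - int i \<and>
        (\<forall>j::nat. int j \<le> u i \<longrightarrow> u (i + j) \<le> u i - int j))"

definition dual_tamari_diagram :: "nat \<Rightarrow> (nat \<Rightarrow> int) \<Rightarrow> bool" where
  "dual_tamari_diagram n v \<longleftrightarrow>
     (\<forall>i\<in>{1..n}. 0 \<le> v i \<and> v i \<le> int i - 1 \<and>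
        (\<forall>j::nat. int j \<le> v i \<longrightarrow> v (i - j) \<le> v i - int j))"

definition tamari_interval_diagram :: "nat \<Rightarrow> (nat \<Rightarrow> int) \<Rightarrow> (nat \<Rightarrow> int) \<Rightarrow> bool" where
  "tamari_interval_diagram n u v \<longleftrightarrow>
     tamari_diagram n u \<and> dual_tamari_diagram n v \<and>
     (\<forall>i j. 1 \<le> i \<and> i < j \<and> j \<le> n \<and> int (j - i) \<le> u i \<longrightarrow> v j < int (j - i))"

definition u_of :: "nat \<Rightarrow> int list \<Rightarrow> nat \<Rightarrow> int" where
  "u_of n c i = (if 1 \<le> i \<and> i \<le> n - 1 then max (c ! (i - 1)) 0 else 0)"

definition v_of :: "nat \<Rightarrow> int list \<Rightarrow> nat \<Rightarrow> int" where
  "v_of n c i = (if 2 \<le> i \<and> i \<le> n then \<bar>min (c ! (i - 2)) 0\<bar> else 0)"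

definition cubic_coordinate :: "nat \<Rightarrow> int list \<Rightarrow> bool" where
  "cubic_coordinate n c \<longleftrightarrow>
     length c = n - 1 \<and> tamari_interval_diagram n (u_of n c) (v_of n c)"

definition min_incr_defined :: "nat \<Rightarrow> nat \<Rightarrow> int list \<Rightarrow> bool" where
  "min_incr_defined n i c \<longleftrightarrow>
     (\<exists>t. t > c ! (i - 1) \<and> cubic_coordinate n (c[i - 1 := t]))"

definition min_incr :: "nat \<Rightarrow> nat \<Rightarrow> int list \<Rightarrow> int list option" where
  "min_incr n i c =
     (if min_incr_defined n i c
      then Some (c[i - 1 := (LEAST t. t > c ! (i - 1) \<and> cubic_coordinate n (c[i - 1 := t]))])
      else None)"

definition minimal_cellular :: "nat \<Rightarrow> int list \<Rightarrow> bool" where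
  "minimal_cellular n c \<longleftrightarrow>
     cubic_coordinate n c \<and> (\<forall>i\<in>{1..n - 1}. min_incr_defined n i c)"

text \<open>Composition up_1(up_2(...(up_{n-1}(c))...)): apply positions n-1, n-2, ..., 1
  in turn; None if some step is undefined.\<close>

fun incr_chain :: "nat \<Rightarrow> nat \<Rightarrow> int list \<Rightarrow> int list option" where
  "incr_chain n 0 c = Some c"
| "incr_chain n (Suc k) c =
     (case min_incr n (Suc k) c of None \<Rightarrow> None | Some c' \<Rightarrow> incr_chain n k c')"

definition is_cell :: "nat \<Rightarrow> int list \<Rightarrow> int list \<Rightarrow> bool" where
  "is_cell n cm cM \<longleftrightarrow> minimal_cellular n cm \<and> incr_chain n (n - 1) cm = Some cM"

end

theory Submission
  imports Defs
begin

definition pc :: "int \<Rightarrow> int \<Rightarrow> int \<Rightarrow> bool" where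
  "pc d x y \<longleftrightarrow> (d \<le> x \<longrightarrow> y \<le> x - d) \<and> (y \<le> - d \<longrightarrow> y + d \<le> x) \<and> (d < x \<longrightarrow> - d \<le> y)"

definition pw :: "nat \<Rightarrow> int list \<Rightarrow> bool" where
  "pw n c \<longleftrightarrow> length c = n - 1 \<and>
     (\<forall>i<n-1. c!i \<le> int n - int i - 1 \<and> - int i - 1 \<le> c!i) \<and>
     (\<forall>i j. i < j \<longrightarrow> j < n - 1 \<longrightarrow> pc (int j - int i) (c!i) (c!j))"

lemma cc_pw:
  assumes "cubic_coordinate n c"
  shows "pw n c"
proof -
  have len: "length c = n - 1" using assms by (simp add: cubic_coordinate_def)
  have T: "tamari_diagram n (u_of n c)" and D: "dual_tamari_diagram n (v_of n c)"
    and I: "\<forall>i j. 1 \<le> i \<and> i < j \<and> j \<le> n \<and> int (j - i) \<le> u_of n c i \<longrightarrow> v_of n c j < int (j - i)"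
    using assms by (auto simp: cubic_coordinate_def tamari_interval_diagram_def)
  have B: "c!i \<le> int n - int i - 1 \<and> - int i - 1 \<le> c!i" if "i < n - 1" for i
  proof -
    have "u_of n c (i+1) \<le> int n - int (i+1)" using T that unfolding tamari_diagram_def
      by (meson Suc_eq_plus1 atLeastAtMost_iff le_add2 less_diff_conv less_imp_le_nat)
    moreover have "i+2 \<in> {1..n}" using that by auto
    then have "v_of n c (i+2) \<le> int (i+2) - 1" using D unfolding dual_tamari_diagram_def by blast
    moreover have "v_of n c (i+2) = \<bar>min (c!i) 0\<bar>" using that by (auto simp: v_of_def)
    moreover have "u_of n c (i+1) = max (c!i) 0" using that by (auto simp: u_of_def)
    ultimately show ?thesis by auto
  qed
  have P: "pc (int j - int i) (c!i) (c!j)" if "i < j" "j < n - 1" for i j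
  proof -
    have u1: "u_of n c (i+1) = max (c!i) 0" using that by (auto simp: u_of_def)
    have u2: "u_of n c (i+1+(j-i)) = max (c!j) 0" using that by (auto simp: u_of_def)
    have v1: "v_of n c (i+2) = \<bar>min (c!i) 0\<bar>" using that by (auto simp: v_of_def)
    have v2: "v_of n c (j+2) = \<bar>min (c!j) 0\<bar>" using that by (auto simp: v_of_def)
    have t: "\<forall>jj::nat. int jj \<le> u_of n c (i+1) \<longrightarrow> u_of n c (i+1 + jj) \<le> u_of n c (i+1) - int jj"
      proof -
      have "i+1 \<in> {1..n}" using that by auto
      then show ?thesis using T unfolding tamari_diagram_def by blast
    qed
    have d: "\<forall>jj::nat. int jj \<le> v_of n c (j+2) \<longrightarrow> v_of n c (j+2 - jj) \<le> v_of n c (j+2) - int jj"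
      proof -
      have "j+2 \<in> {1..n}" using that by auto
      then show ?thesis using D unfolding dual_tamari_diagram_def by blast
    qed
    have e: "j + 2 - (j - i) = i + 2" using that by simp
    have 1: "c!j \<le> c!i - (int j - int i)" if "int j - int i \<le> c!i"
      using t[rule_format, of "j-i"] u1 u2 that \<open>i<j\<close> by auto
    have 2: "c!j + (int j - int i) \<le> c!i" if "c!j \<le> - (int j - int i)"
      using d[rule_format, of "j-i"] v1 v2 that \<open>i<j\<close> e by auto
    have jn: "Suc (Suc j) \<le> n" using that by auto
    have 3: "- (int j - int i) \<le> c!j" if "int j - int i < c!i"
      using I[rule_format, of "i+1" "j+2"] u1 v2 that \<open>i<j\<close> jn by auto
    show ?thesis using 1 2 3 by (simp add: pc_def)
  qed
  show ?thesis using len B P by (simp add: pw_def)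
qed

lemma pw_cc:
  assumes "pw n c"
  shows "cubic_coordinate n c"
proof -
  have len: "length c = n - 1" and B: "\<And>i. i<n-1 \<Longrightarrow> c!i \<le> int n - int i - 1 \<and> - int i - 1 \<le> c!i"
    and P: "\<And>i j. i < j \<Longrightarrow> j < n - 1 \<Longrightarrow> pc (int j - int i) (c!i) (c!j)"
    using assms by (auto simp: pw_def)
  have T: "tamari_diagram n (u_of n c)"
    unfolding tamari_diagram_def
  proof (intro ballI conjI allI impI)
    fix i assume i: "i \<in> {1..n}"
    show "0 \<le> u_of n c i" by (simp add: u_of_def)
    show "u_of n c i \<le> int n - int i" using i B[of "i-1"] by (auto simp: u_of_def)
    fix j :: nat assume j: "int j \<le> u_of n c i"
    show "u_of n c (i + j) \<le> u_of n c i - int j"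
    proof (cases "j = 0")
      case True then show ?thesis by simp
    next
      case False
      then have ii: "1 \<le> i \<and> i \<le> n - 1" and ci: "u_of n c i = c!(i-1)" and cj: "int j \<le> c!(i-1)"
        using j by (auto simp: u_of_def split: if_splits)
      show ?thesis
      proof (cases "i + j \<le> n - 1")
        case True
        have "pc (int (i+j-1) - int (i-1)) (c!(i-1)) (c!(i+j-1))"
          using P[of "i-1" "i+j-1"] True False ii by auto
        moreover have "int (i+j-1) - int (i-1) = int j" using ii by auto
        ultimately show ?thesis using ci cj True False ii by (auto simp: pc_def u_of_def)
      next
        case False
        then show ?thesis using ci cj by (auto simp: u_of_def)
      qed
    qed
  qed
  have D: "dual_tamari_diagram n (v_of n c)"
    unfolding dual_tamari_diagram_def
  proof (intro ballI conjI allI impI)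
    fix i assume i: "i \<in> {1..n}"
    show "0 \<le> v_of n c i" by (simp add: v_of_def)
    show "v_of n c i \<le> int i - 1"
    proof (cases "2 \<le> i")
      case True
      then have "i - 2 < n - 1" using i by auto
      then show ?thesis using i True B[of "i-2"] by (auto simp: v_of_def)
    qed (use i in \<open>auto simp: v_of_def\<close>)
    fix j :: nat assume j: "int j \<le> v_of n c i"
    show "v_of n c (i - j) \<le> v_of n c i - int j"
    proof (cases "j = 0")
      case True then show ?thesis by simp
    next
      case False
      then have ii: "2 \<le> i \<and> i \<le> n" and ci: "v_of n c i = - c!(i-2)" and cj: "c!(i-2) \<le> - int j"
        using j by (auto simp: v_of_def split: if_splits)
      show ?thesis
      proof (cases "2 \<le> i - j")
        case True
        have "pc (int (i-2) - int (i-j-2)) (c!(i-j-2)) (c!(i-2))"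
          using P[of "i-j-2" "i-2"] True False ii by auto
        moreover have "int (i-2) - int (i-j-2) = int j" using ii True by auto
        ultimately show ?thesis using ci cj True False ii by (auto simp: pc_def v_of_def)
      next
        case False
        then show ?thesis using ci cj by (auto simp: v_of_def)
      qed
    qed
  qed
  have I: "\<forall>i j. 1 \<le> i \<and> i < j \<and> j \<le> n \<and> int (j - i) \<le> u_of n c i \<longrightarrow> v_of n c j < int (j - i)"
  proof (intro allI impI)
    fix i j assume a: "1 \<le> i \<and> i < j \<and> j \<le> n \<and> int (j - i) \<le> u_of n c i"
    then have ii: "i \<le> n - 1" and ci: "int (j - i) \<le> c!(i-1)"
      by (auto simp: u_of_def split: if_splits)
    have vj: "v_of n c j = \<bar>min (c!(j-2)) 0\<bar>" using a by (auto simp: v_of_def)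
    show "v_of n c j < int (j - i)"
    proof (cases "j = i + 1")
      case True
      then show ?thesis using vj ci by auto
    next
      case False
      have "pc (int (j-2) - int (i-1)) (c!(i-1)) (c!(j-2))"
        using P[of "i-1" "j-2"] False a by auto
      moreover have "int (j-2) - int (i-1) = int (j - i) - 1" using a False by auto
      ultimately have h: "1 - int (j - i) \<le> c!(j-2)" using ci unfolding pc_def by linarith
      show ?thesis using vj h a by (simp add: min_def abs_if)
    qed
  qed
  show ?thesis using len T D I by (simp add: cubic_coordinate_def tamari_interval_diagram_def)
qed

lemma pw_zero:
  assumes "pw n c" "a < n - 1"
  shows "pw n (c[a := 0])"
proof -
  have len: "length c = n - 1" and B: "\<And>i. i<n-1 \<Longrightarrow> c!i \<le> int n - int i - 1 \<and> - int i - 1 \<le> c!i"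
    and P: "\<And>i j. i < j \<Longrightarrow> j < n - 1 \<Longrightarrow> pc (int j - int i) (c!i) (c!j)"
    using assms by (auto simp: pw_def)
  have B': "(c[a:=0])!i \<le> int n - int i - 1 \<and> - int i - 1 \<le> (c[a:=0])!i" if "i < n-1" for i
    using B[OF that] that len by (cases "i = a") auto
  have P': "pc (int j - int i) ((c[a:=0])!i) ((c[a:=0])!j)" if "i < j" "j < n-1" for i j
  proof -
    have e: "0 < int j - int i" using that by simp
    show ?thesis
    proof (cases "i = a \<or> j = a")
      case True
      then show ?thesis using e that len by (auto simp: pc_def)
    next
      case False
      then show ?thesis using P[OF that] by simp
    qed
  qed
  show ?thesis using len B' P' by (simp add: pw_def)
qed

lemma cc_zero:
  assumes "cubic_coordinate n c" "a < n - 1"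
  shows "cubic_coordinate n (c[a := 0])"
  using pw_zero[OF cc_pw[OF assms(1)] assms(2)] pw_cc by blast

lemma cc_pc:
  assumes "cubic_coordinate n x" "i < j" "j < n - 1"
  shows "pc (int j - int i) (x!i) (x!j)"
  using cc_pw[OF assms(1)] assms(2,3) by (simp add: pw_def)

lemma chain:
  "incr_chain n k c = Some d \<Longrightarrow> k \<le> length c \<Longrightarrow>
   length d = length c \<and> drop k d = drop k c \<and>
   (\<forall>p. 1 \<le> p \<and> p \<le> k \<longrightarrow> min_incr n p (take p c @ drop p d) = Some (take (p-1) c @ drop (p-1) d))"
proof (induction k arbitrary: c)
  case 0
  then show ?case by simp
next
  case (Suc k)
  obtain c' where c': "min_incr n (Suc k) c = Some c'" and r: "incr_chain n k c' = Some d"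
    using Suc.prems(1) by (auto split: option.splits)
  obtain L where cL: "c' = c[k := L]" using c' by (auto simp: min_incr_def split: if_splits)
  have lc: "length c' = length c" using cL by simp
  have IH: "length d = length c' \<and> drop k d = drop k c' \<and>
   (\<forall>p. 1 \<le> p \<and> p \<le> k \<longrightarrow> min_incr n p (take p c' @ drop p d) = Some (take (p-1) c' @ drop (p-1) d))"
    using Suc.IH[OF r] Suc.prems(2) lc by simp
  have k: "k < length c" using Suc.prems(2) by simp
  have d1: "drop (Suc k) d = drop (Suc k) c"
  proof -
    have "drop (Suc k) d = drop 1 (drop k d)" by simp
    also have "\<dots> = drop 1 (drop k c')" using IH by simp
    also have "\<dots> = drop (Suc k) c" using cL k by simp
    finally show ?thesis .
  qed
  have tk: "take p c' = take p c" if "p \<le> k" for p using cL that by simp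
  have e1: "take (Suc k) c @ drop (Suc k) d = c" using d1 by simp
  have e2: "take k c @ drop k d = c'" using IH tk[of k] by (metis append_take_drop_id order_refl)
  show ?case
  proof (intro conjI allI impI)
    show "length d = length c" using IH lc by simp
    show "drop (Suc k) d = drop (Suc k) c" by (rule d1)
    fix p assume p: "1 \<le> p \<and> p \<le> Suc k"
    show "min_incr n p (take p c @ drop p d) = Some (take (p - 1) c @ drop (p - 1) d)"
    proof (cases "p = Suc k")
      case True
      then show ?thesis using e1 e2 c' by simp
    next
      case False
      then have "p \<le> k" using p by simp
      moreover have "min_incr n p (take p c' @ drop p d) = Some (take (p-1) c' @ drop (p-1) d)"
        using IH p \<open>p \<le> k\<close> by blast
      ultimately show ?thesis using tk[of p] tk[of "p-1"] by simp
    qed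
  qed
qed

lemma step:
  assumes "min_incr n p s = Some s'" "p - 1 < length s"
  shows "s' = s[p-1 := s'!(p-1)] \<and> cubic_coordinate n s' \<and>
         s!(p-1) < s'!(p-1) \<and>
         (\<forall>t. s!(p-1) < t \<and> cubic_coordinate n (s[p-1:=t]) \<longrightarrow> s'!(p-1) \<le> t)"
proof -
  define P where "P = (\<lambda>t. s!(p-1) < t \<and> cubic_coordinate n (s[p-1:=t]))"
  have def: "min_incr_defined n p s" and s': "s' = s[p-1 := Least P]"
    using assms by (auto simp: min_incr_def P_def split: if_splits)
  have ex: "\<exists>t. P t" using def by (simp add: min_incr_defined_def P_def)
  define Q where "Q = (\<lambda>k::nat. P (s!(p-1) + 1 + int k))"
  have Pgt: "P y \<Longrightarrow> y = s!(p-1) + 1 + int (nat (y - s!(p-1) - 1))" for y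
    by (simp add: P_def)
  obtain t where t: "P t" using ex by blast
  have Qt: "Q (nat (t - s!(p-1) - 1))" using Pgt[OF t] t by (simp add: Q_def)
  define x where "x = s!(p-1) + 1 + int (LEAST k. Q k)"
  have Px: "P x" using LeastI[of Q, OF Qt] by (simp add: Q_def x_def)
  have xmin: "x \<le> y" if "P y" for y
  proof -
    have "Q (nat (y - s!(p-1) - 1))" using Pgt[OF that] that by (simp add: Q_def)
    then have "(LEAST k. Q k) \<le> nat (y - s!(p-1) - 1)" by (rule Least_le)
    then show ?thesis using Pgt[OF that] unfolding x_def by linarith
  qed
  have LPx: "Least P = x" by (rule Least_equality) (use Px xmin in auto)
  have PL: "P (Least P)" using Px LPx by simp
  have LL: "\<forall>t. P t \<longrightarrow> Least P \<le> t" using xmin LPx by simp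
  show ?thesis using PL LL s' assms(2) by (auto simp: P_def)
qed

lemma pc_mix:
  assumes "pc d Ma Mb" "pc d ma mb" "ma < Ma" "mb < Mb" "\<not> (d < Ma \<and> mb < - d)"
  shows "pc d Ma mb"
  using assms by (auto simp: pc_def)

theorem theorem4p7:
  fixes n :: nat and cm cM c :: "int list"
  assumes "is_cell n cm cM"
    and "length c = n - 1"
    and "\<forall>i < n - 1. c ! i = cm ! i \<or> c ! i = cM ! i"
  shows "cubic_coordinate n c"
proof -
  define N where "N = n - 1"
  have mcell: "minimal_cellular n cm" and ch: "incr_chain n N cm = Some cM"
    using assms(1) by (auto simp: is_cell_def N_def)
  have cm: "cubic_coordinate n cm" using mcell by (simp add: minimal_cellular_def)
  have lm: "length cm = N" using cm by (simp add: cubic_coordinate_def N_def)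
  have C: "length cM = N \<and> drop N cM = drop N cm \<and>
   (\<forall>p. 1 \<le> p \<and> p \<le> N \<longrightarrow> min_incr n p (take p cm @ drop p cM) = Some (take (p-1) cm @ drop (p-1) cM))"
    using chain[OF ch] lm by simp
  have lM: "length cM = N" using C by simp
  define S where "S = (\<lambda>p. take p cm @ drop p cM)"
  have Snth: "S p ! k = (if k < p then cm!k else cM!k)" if "p \<le> N" "k < N" for p k
    using that lm lM by (auto simp: S_def nth_append min_def)
  have SN: "S N = cm" using lm lM by (simp add: S_def)
  have Sstep: "min_incr n (a+1) (S (a+1)) = Some (S a)" if "a < N" for a
    using C that by (simp add: S_def)
  have lS: "length (S p) = N" if "p \<le> N" for p using that lm lM by (simp add: S_def)
  have stp: "S a = (S (a+1))[a := S a ! a] \<and> cubic_coordinate n (S a) \<and>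
         S (a+1) ! a < S a ! a \<and>
         (\<forall>t. S (a+1) ! a < t \<and> cubic_coordinate n ((S (a+1))[a:=t]) \<longrightarrow> S a ! a \<le> t)"
    if "a < N" for a
    using step[OF Sstep[OF that]] lS[of "a+1"] that by simp
  have cS: "cubic_coordinate n (S p)" if "p \<le> N" for p
  proof (cases "p = N")
    case True then show ?thesis using SN cm by simp
  next
    case False then show ?thesis using stp[of p] that by simp
  qed
  have gt: "cm!a < cM!a" if "a < N" for a
    using stp[OF that] Snth[of "a+1" a] Snth[of a a] that by simp
  have minM: "cM!a \<le> t" if "a < N" "cm!a < t" "cubic_coordinate n ((S (a+1))[a:=t])" for a t
    using stp[OF that(1)] Snth[of "a+1" a] Snth[of a a] that by simp
  have mc: "\<exists>t. cm!a < t \<and> cubic_coordinate n (cm[a:=t])" if "a < N" for a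
  proof -
    have "min_incr_defined n (a+1) cm" using mcell that by (simp add: minimal_cellular_def N_def)
    then show ?thesis by (simp add: min_incr_defined_def)
  qed
  have PC: "pc (int j - int i) (x!i) (x!j)" if "cubic_coordinate n x" "i < j" "j < N" for x i j
    using cc_pc that by (simp add: N_def)
  have L: "\<not> (int b - int a < cM!a \<and> cm!b < - (int b - int a))" if "a < b" "b < N" for a b
  proof -
    have "\<forall>a. a < b \<longrightarrow> b - a = k \<longrightarrow> \<not> (int b - int a < cM!a \<and> cm!b < - (int b - int a))" for k
    proof (induction k rule: less_induct)
      case (less k)
      show ?case
      proof (intro allI impI notI)
        fix a assume ab: "a < b" and k: "b - a = k" and bad: "int b - int a < cM!a \<and> cm!b < - (int b - int a)"
        define D where "D = int b - int a"
        have Dpos: "0 < D" using ab by (simp add: D_def)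
        have Ma: "D < cM!a" and mb: "cm!b < - D" using bad by (auto simp: D_def)
        have Mb0: "cM!b \<le> 0"
        proof (rule minM)
          show "b < N" by fact
          show "cm!b < 0" using mb Dpos by simp
          show "cubic_coordinate n ((S (b+1))[b:=0])"
            using cc_zero[OF cS[of "b+1"]] \<open>b < N\<close> by (simp add: N_def)
        qed
        obtain t where t: "cm!a < t" "cubic_coordinate n (cm[a:=t])" using mc[of a] ab \<open>b<N\<close> by auto
        have "pc D t (cm!b)" using PC[OF t(2) ab \<open>b<N\<close>] ab lm \<open>b<N\<close> by (simp add: D_def)
        then have "t \<le> D" using mb by (auto simp: pc_def)
        then have ma: "cm!a < D" using t by simp
        define X where "X = (S (a+1))[a := D]"
        have aN: "a < N" using ab \<open>b<N\<close> by simp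
        have lX: "length X = N" using lS[of "a+1"] aN by (simp add: X_def)
        have Xnth: "X!k = (if k = a then D else if k < a then cm!k else cM!k)" if "k < N" for k
          using Snth[of "a+1" k] that aN lS[of "a+1"] by (auto simp: X_def)
        have pwSa: "pw n (S a)" using cc_pw[OF cS[of a]] aN by simp
        have Santh: "S a ! k = (if k < a then cm!k else cM!k)" if "k < N" for k
          using Snth[of a k] that aN by simp
        have "pw n X"
          unfolding pw_def
        proof (intro conjI allI impI)
          show "length X = n - 1" using lX by (simp add: N_def)
          fix i assume i: "i < n - 1"
          show "X!i \<le> int n - int i - 1"
          proof (cases "i = a")
            case True then show ?thesis using Xnth[of i] i ab \<open>b<N\<close> by (simp add: D_def N_def)
          next
            case False
            have "S a ! i \<le> int n - int i - 1" using pwSa i unfolding pw_def by blast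
            then show ?thesis using False Xnth[of i] i Santh[of i] by (simp add: N_def)
          qed
          show "- int i - 1 \<le> X!i"
          proof (cases "i = a")
            case True then show ?thesis using Xnth[of i] i Dpos by (simp add: N_def)
          next
            case False
            have "- int i - 1 \<le> S a ! i" using pwSa i unfolding pw_def by blast
            then show ?thesis using False Xnth[of i] i Santh[of i] by (simp add: N_def)
          qed
        next
          fix i j assume ij: "i < j" "j < n - 1"
          have jN: "j < N" using ij by (simp add: N_def)
          have pSa: "pc (int j - int i) (S a ! i) (S a ! j)" using pwSa ij by (simp add: pw_def)
          show "pc (int j - int i) (X!i) (X!j)"
          proof (cases "j = a")
            case True
            then have "X!i = S a ! i" "X!j = D" "S a ! j = cM!a" using Xnth[of i] Xnth[of j] Santh[of i] Santh[of j] ij jN by auto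
            then show ?thesis using pSa Ma Dpos ij by (auto simp: pc_def)
          next
            case False
            note ja = False
            show ?thesis
            proof (cases "i = a")
              case False
              then have "X!i = S a ! i" "X!j = S a ! j" using ja Xnth[of i] Xnth[of j] Santh[of i] Santh[of j] ij jN by auto
              then show ?thesis using pSa by simp
            next
              case True
              then have xi: "X!i = D" "X!j = cM!j" "S a ! i = cM!a" "S a ! j = cM!j"
                using Xnth[of i] Xnth[of j] Santh[of i] Santh[of j] ij jN by auto
              have A1: "cM!j \<le> D - (int j - int i)" if "int j - int i \<le> D"
              proof (cases "j = b")
                case True then show ?thesis using Mb0 \<open>i = a\<close> by (simp add: D_def)
              next
                case False
                then have jb: "j < b" using that \<open>i = a\<close> by (simp add: D_def)
                have "b - j < k" using jb k ij \<open>i = a\<close> by simp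
                then have "\<not> (int b - int j < cM!j \<and> cm!b < - (int b - int j))"
                  using less.IH jb by blast
                moreover have "cm!b < - (int b - int j)" using mb \<open>i=a\<close> ij by (simp add: D_def)
                ultimately show ?thesis using \<open>i=a\<close> by (simp add: D_def)
              qed
              show ?thesis using xi pSa A1 Ma Dpos by (auto simp: pc_def)
            qed
          qed
        qed
        then have "cubic_coordinate n X" by (rule pw_cc)
        then have "cM!a \<le> D" using minM[OF aN ma] by (simp add: X_def)
        then show False using Ma by simp
      qed
    qed
    then show ?thesis using that by blast
  qed
  have "pw n c"
    unfolding pw_def
  proof (intro conjI allI impI)
    show "length c = n - 1" by (rule assms(2))
    fix i assume i: "i < n - 1"
    have "pw n cm" "pw n cM" using cc_pw cm cS[of 0] S_def by auto
    then show "c!i \<le> int n - int i - 1" "- int i - 1 \<le> c!i" using assms(3) i by (auto simp: pw_def)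
  next
    fix i j assume ij: "i < j" "j < n - 1"
    have jN: "j < N" using ij by (simp add: N_def)
    have iN: "i < N" using ij jN by simp
    have mm: "pc (int j - int i) (cm!i) (cm!j)" using PC[OF cm ij(1) jN] .
    have MM: "pc (int j - int i) (cM!i) (cM!j)" using PC[OF cS[of i] ij(1) jN] Snth[of i i] Snth[of i j] iN jN ij by simp
    have mM: "pc (int j - int i) (cm!i) (cM!j)" using PC[OF cS[of "i+1"] ij(1) jN] Snth[of "i+1" i] Snth[of "i+1" j] iN jN ij by simp
    have Mm: "pc (int j - int i) (cM!i) (cm!j)"
      using pc_mix[OF MM mm gt[OF iN] gt[OF jN] L[OF ij(1) jN]] .
    show "pc (int j - int i) (c!i) (c!j)"
      using assms(3) ij mm MM mM Mm by (metis N_def iN jN)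
  qed
  then show ?thesis by (rule pw_cc)
qed

end
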